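(* Let $Q:(-\infty,-1)\to(-\infty,0)$ be the inverse of the strictly increasing function $G\mapsto G-e^G$ on $(-\infty,0)$, and define $R:\mathbb{R}\to\mathbb{R}$ by $R(V)=-2(1-e^{Q(V)})^2$ for $V<-1$ and $R(V)=4(V+1)$ for $V\ge -1$. Fix $m<-1$. For $n\in\mathbb{R}$ let $V(t;n)$ denote the unique solution of $V''+3V'=R(V)$, $t>0$, $V(0)=m$, $V'(0)=n$ (prime denoting $d/dt$, $V_t=dV/dt$). Define $\beta^-=\{n\in\mathbb{R}: \text{there exists } t>0 \text{ with } V_t(t;n)<0\}$ and $\beta^+=\{n\in\mathbb{R}: V_t(t;n)>0 \text{ for all } t\ge 0 \text{ and } V(t;n)>-1 \text{ for some } t>0\}$. Then $\beta^+$ and $\beta^-$ are both open and nonempty subsets of $\mathbb{R}$. *)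

theory Defs
  imports Complex_Main
begin

definition Q :: "real \<Rightarrow> real" where
  "Q V = (THE G. G < 0 \<and> G - exp G = V)"

definition R :: "real \<Rightarrow> real" where
  "R V = (if V < -1 then -2 * (1 - exp (Q V))^2 else 4 * (V + 1))"

definition is_sol :: "real \<Rightarrow> real \<Rightarrow> (real \<Rightarrow> real) \<Rightarrow> (real \<Rightarrow> real) \<Rightarrow> bool" where
  "is_sol m n f f' \<longleftrightarrow>
     f 0 = m \<and> f' 0 = n \<and>
     (\<forall>t\<ge>0. (f has_real_derivative f' t) (at t within {0..})) \<and>
     continuous_on {0..} f' \<and>
     (\<forall>t>0. (f' has_real_derivative (R (f t) - 3 * f' t)) (at t))"

definition solpair :: "real \<Rightarrow> real \<Rightarrow> (real \<Rightarrow> real) \<times> (real \<Rightarrow> real)" where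
  "solpair m n = (SOME p. is_sol m n (fst p) (snd p))"

definition Vsol :: "real \<Rightarrow> real \<Rightarrow> real \<Rightarrow> real" where
  "Vsol m n t = fst (solpair m n) t"

definition Vt :: "real \<Rightarrow> real \<Rightarrow> real \<Rightarrow> real" where
  "Vt m n t = snd (solpair m n) t"

definition beta_minus :: "real \<Rightarrow> real set" where
  "beta_minus m = {n. \<exists>t>0. Vt m n t < 0}"

definition beta_plus :: "real \<Rightarrow> real set" where
  "beta_plus m = {n. (\<forall>t\<ge>0. Vt m n t > 0) \<and> (\<exists>t>0. Vsol m n t > -1)}"

end

theory Submission
  imports Defs "HOL-Analysis.Analysis"
begin


lemma psi_strict:
  fixes h g :: real
  assumes "h < g" "g \<le> 0" shows "h - exp h < g - exp g"
proof -
  have "\<And>x. h < x \<Longrightarrow> x < g \<Longrightarrow> \<exists>y. ((\<lambda>x. x - exp x) has_real_derivative y) (at x) \<and> y > 0"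
  proof -
    fix x :: real assume "h < x" "x < g"
    then have "exp x < 1" using assms by simp
    then show "\<exists>y. ((\<lambda>x. x - exp x) has_real_derivative y) (at x) \<and> y > 0"
      by (intro exI[of _ "1 - exp x"]) (auto intro!: derivative_eq_intros)
  qed
  moreover have "continuous_on {h..g} (\<lambda>x::real. x - exp x)" by (intro continuous_intros)
  ultimately show ?thesis using DERIV_pos_imp_increasing_open[OF assms(1)] by blast
qed

lemma Q_prop:
  assumes "V < -1" shows "Q V < 0 \<and> Q V - exp (Q V) = V"
proof -
  have "\<exists>x. V \<le> x \<and> x \<le> 0 \<and> x - exp x = V"
    by (rule IVT'[where f="\<lambda>x. x - exp x"]) (use assms in \<open>auto intro!: continuous_intros\<close>)
  then obtain x where x: "V \<le> x" "x \<le> 0" "x - exp x = V" by blast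
  have x0: "x < 0" using x assms by (cases "x = 0") auto
  have "Q V = x" unfolding Q_def
  proof (rule the_equality)
    show "x < 0 \<and> x - exp x = V" using x x0 by auto
  next
    fix y assume y: "y < 0 \<and> y - exp y = V"
    show "y = x"
    proof (rule ccontr)
      assume "y \<noteq> x"
      then have "y < x \<or> x < y" by auto
      then show False using psi_strict[of y x] psi_strict[of x y] x x0 y by auto
    qed
  qed
  then show ?thesis using x x0 by auto
qed

lemma k_mono:
  fixes h g :: real
  assumes "h \<le> g" "g \<le> 0"
  shows "(1-exp h)^2 + 2*(h - exp h) \<le> (1-exp g)^2 + 2*(g - exp g)"
proof (rule DERIV_nonneg_imp_nondecreasing[OF assms(1)])
  fix x :: real
  have "((\<lambda>x. (1-exp x)^2 + 2*(x - exp x)) has_real_derivative (2*(1-exp x)^2)) (at x)"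
    by (auto intro!: derivative_eq_intros simp: algebra_simps power2_eq_square)
  then show "\<exists>y. ((\<lambda>x. (1-exp x)^2 + 2*(x - exp x)) has_real_derivative y) (at x) \<and> y \<ge> 0"
    by (intro exI[of _ "2*(1-exp x)^2"]) auto
qed

lemma phi_mono:
  fixes h g :: real
  assumes "h \<le> g" "g \<le> 0"
  shows "(1-exp g)^2 \<le> (1-exp h)^2"
proof -
  have "exp h \<le> exp g" "exp g \<le> 1" using assms by auto
  then show ?thesis by (intro power_mono) auto
qed

lemma R_mono_lip:
  assumes "b \<le> a" shows "0 \<le> R a - R b \<and> R a - R b \<le> 4*(a-b)"
proof (cases "a < -1")
  case True
  then have b: "b < -1" using assms by auto
  define g where "g = Q a"
  define h where "h = Q b"
  have g: "g < 0" "g - exp g = a" using Q_prop[OF True] g_def by auto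
  have h: "h < 0" "h - exp h = b" using Q_prop[OF b] h_def by auto
  have hg: "h \<le> g"
  proof (rule ccontr)
    assume "\<not> h \<le> g" then have "g < h" by auto
    then have "g - exp g < h - exp h" using psi_strict h by auto
    then show False using g h assms by auto
  qed
  have R: "R a - R b = 2*((1-exp h)^2 - (1-exp g)^2)"
    using True b g_def h_def by (simp add: R_def)
  show ?thesis using k_mono[OF hg] phi_mono[OF hg] g h R by auto
next
  case False
  show ?thesis
  proof (cases "b < -1")
    case True
    define h where "h = Q b"
    have h: "h < 0" "h - exp h = b" using Q_prop[OF True] h_def by auto
    have R: "R a - R b = 4*(a+1) + 2*(1-exp h)^2"
      using True False h_def by (simp add: R_def)
    have "(1-exp h)^2 + 2*(h - exp h) \<le> (1-exp 0)^2 + 2*(0 - exp 0)"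
      using k_mono[of h 0] h by auto
    then show ?thesis using R h False by auto
  next
    case False2: False
    then show ?thesis using False assms by (simp add: R_def)
  qed
qed

lemma R_lip: "\<bar>R a - R b\<bar> \<le> 4 * \<bar>a - b\<bar>"
proof (cases "b \<le> a")
  case True then show ?thesis using R_mono_lip[OF True] by auto
next
  case False then have "a \<le> b" by auto
  then show ?thesis using R_mono_lip[of a b] by auto
qed

lemma R_ge: "R v \<ge> -2"
proof (cases "v < -1")
  case True
  have q: "Q v < 0" using Q_prop[OF True] by auto
  then have "exp (Q v) < 1" "exp (Q v) > 0" by auto
  then have "(1 - exp (Q v))^2 \<le> 1" by (intro power_le_one) auto
  then show ?thesis using True by (simp add: R_def)
next
  case False then show ?thesis by (simp add: R_def)
qed

lemma R_pos: "v > -1 \<Longrightarrow> R v = 4*(v+1)" by (simp add: R_def)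

lemma R_cont: "continuous_on S R"
proof -
  have "4-lipschitz_on S R"
    by (rule lipschitz_onI) (auto simp: dist_real_def R_lip)
  then show ?thesis by (rule lipschitz_on_continuous_on)
qed

lemma sol_cont: assumes "is_sol m n f g" shows "continuous_on {0..} f"
proof -
  have d: "\<forall>t\<ge>0. (f has_real_derivative g t) (at t within {0..})" using assms unfolding is_sol_def by blast
  show ?thesis by (rule DERIV_continuous_on[of _ _ g]) (use d in auto)
qed

lemma sol_gcont: "is_sol m n f g \<Longrightarrow> continuous_on {0..} g"
  unfolding is_sol_def by blast

lemma sol_at: assumes "is_sol m n f g" "t > 0" shows "(f has_real_derivative g t) (at t)"
proof -
  have d: "\<forall>t\<ge>0. (f has_real_derivative g t) (at t within {0..})" using assms unfolding is_sol_def by blast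
  have "t \<in> interior {0..}" using assms by auto
  then have "at t within {0..} = at t" by (rule at_within_interior)
  then show ?thesis using d assms(2) by (metis less_imp_le)
qed

lemma sol_gat: assumes "is_sol m n f g" "t > 0" shows "(g has_real_derivative (R (f t) - 3 * g t)) (at t)"
  using assms unfolding is_sol_def by blast

lemma energy_ineq:
  fixes a b r :: real
  assumes "\<bar>r\<bar> \<le> 4 * \<bar>a\<bar>"
  shows "-5*(a^2+b^2) + 2*a*b + 2*b*(r - 3*b) \<le> 0"
proof -
  have 1: "2*(a*b) \<le> a^2+b^2" using sum_squares_ge_zero[of "a-b" 0]
    by (simp add: power2_eq_square algebra_simps)
  have "2*(b*r) \<le> 2*\<bar>b\<bar>*\<bar>r\<bar>" by (simp add: abs_mult[symmetric])
  also have "\<dots> \<le> 2*\<bar>b\<bar>*(4*\<bar>a\<bar>)" using assms by (intro mult_left_mono) auto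
  also have "\<dots> \<le> 4*(a^2+b^2)"
  proof -
    have "0 \<le> (\<bar>a\<bar> - \<bar>b\<bar>)^2" by simp
    then show ?thesis by (simp add: power2_eq_square algebra_simps)
  qed
  finally have 2: "2*(b*r) \<le> 4*(a^2+b^2)" .
  have 3: "0 \<le> b^2" by simp
  have e: "-5*(a^2+b^2) + 2*a*b + 2*b*(r - 3*b) = -5*(a^2+b^2) + 2*(a*b) + 2*(b*r) - 6*b^2"
    by (simp add: algebra_simps power2_eq_square)
  show ?thesis unfolding e using 1 2 3 by (smt (verit))
qed




lemma stability:
  assumes s1: "is_sol m1 n1 f1 g1" and s2: "is_sol m2 n2 f2 g2" and t: "t \<ge> 0"
  shows "(f1 t - f2 t)^2 + (g1 t - g2 t)^2 \<le> exp (5*t) * ((m1-m2)^2 + (n1-n2)^2)"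
proof -
  define h where "h x = exp (-5*x) * ((f1 x - f2 x)^2 + (g1 x - g2 x)^2)" for x
  have "h t \<le> h 0"
  proof (rule DERIV_nonpos_imp_decreasing_open[OF t])
    fix x :: real assume x: "0 < x" "x < t"
    have d1: "((\<lambda>x. f1 x - f2 x) has_real_derivative (g1 x - g2 x)) (at x)"
      by (intro derivative_intros sol_at[OF s1] sol_at[OF s2] x)
    have d2: "((\<lambda>x. g1 x - g2 x) has_real_derivative ((R (f1 x) - 3 * g1 x) - (R (f2 x) - 3 * g2 x))) (at x)"
      by (intro derivative_intros sol_gat[OF s1] sol_gat[OF s2] x)
    have d3: "((\<lambda>x. exp (-5*x)) has_real_derivative (exp (-5*x) * (-5))) (at x)"
      by (auto intro!: derivative_eq_intros)
    have d4: "((\<lambda>x. (f1 x - f2 x)^2 + (g1 x - g2 x)^2) has_real_derivative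
        (2*(f1 x - f2 x)*(g1 x - g2 x) + 2*(g1 x - g2 x)*((R (f1 x) - 3 * g1 x) - (R (f2 x) - 3 * g2 x)))) (at x)"
      using DERIV_add[OF DERIV_power[OF d1, of 2] DERIV_power[OF d2, of 2]] by (simp add: algebra_simps)
    have d: "(h has_real_derivative exp (-5*x) * (-5*((f1 x - f2 x)^2 + (g1 x - g2 x)^2)
        + 2*(f1 x - f2 x)*(g1 x - g2 x)
        + 2*(g1 x - g2 x)*((R (f1 x) - R (f2 x)) - 3*(g1 x - g2 x)))) (at x)"
    proof -
      have "(h has_real_derivative (exp (-5*x) * (-5)) * ((f1 x - f2 x)^2 + (g1 x - g2 x)^2) +
         (2*(f1 x - f2 x)*(g1 x - g2 x) + 2*(g1 x - g2 x)*((R (f1 x) - 3 * g1 x) - (R (f2 x) - 3 * g2 x))) * exp (-5*x)) (at x)"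
        unfolding h_def by (rule DERIV_mult[OF d3 d4])
      moreover have "(exp (-5*x) * (-5)) * ((f1 x - f2 x)^2 + (g1 x - g2 x)^2) +
         (2*(f1 x - f2 x)*(g1 x - g2 x) + 2*(g1 x - g2 x)*((R (f1 x) - 3 * g1 x) - (R (f2 x) - 3 * g2 x))) * exp (-5*x)
         = exp (-5*x) * (-5*((f1 x - f2 x)^2 + (g1 x - g2 x)^2)
        + 2*(f1 x - f2 x)*(g1 x - g2 x)
        + 2*(g1 x - g2 x)*((R (f1 x) - R (f2 x)) - 3*(g1 x - g2 x)))"
        by (simp add: algebra_simps)
      ultimately show ?thesis by simp
    qed
    have "-5*((f1 x - f2 x)^2 + (g1 x - g2 x)^2)
        + 2*(f1 x - f2 x)*(g1 x - g2 x)
        + 2*(g1 x - g2 x)*((R (f1 x) - R (f2 x)) - 3*(g1 x - g2 x)) \<le> 0"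
      by (rule energy_ineq) (rule R_lip)
    then have "exp (-5*x) * (-5*((f1 x - f2 x)^2 + (g1 x - g2 x)^2)
        + 2*(f1 x - f2 x)*(g1 x - g2 x)
        + 2*(g1 x - g2 x)*((R (f1 x) - R (f2 x)) - 3*(g1 x - g2 x))) \<le> 0"
      by (simp add: mult_nonneg_nonpos)
    then show "\<exists>y. (h has_real_derivative y) (at x) \<and> y \<le> 0" using d by blast
  next
    have "continuous_on {0..t} f1" "continuous_on {0..t} f2" "continuous_on {0..t} g1" "continuous_on {0..t} g2"
      using sol_cont[OF s1] sol_cont[OF s2] sol_gcont[OF s1] sol_gcont[OF s2]
      by (auto elim!: continuous_on_subset)
    then show "continuous_on {0..t} h" unfolding h_def by (intro continuous_intros)
  qed
  moreover have "h 0 = (m1-m2)^2 + (n1-n2)^2" using s1 s2 unfolding h_def is_sol_def by simp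
  ultimately have "exp (5*t) * h t \<le> exp (5*t) * ((m1-m2)^2 + (n1-n2)^2)" by simp
  moreover have "exp (5*t) * h t = (f1 t - f2 t)^2 + (g1 t - g2 t)^2"
    unfolding h_def by (simp add: exp_minus field_simps)
  ultimately show ?thesis by simp
qed




definition Kop :: "(real \<Rightarrow> real) \<Rightarrow> real \<Rightarrow> real" where
  "Kop h t = integral {0..t} h / 3 - exp(-3*t) * integral {0..t} (\<lambda>s. exp(3* s) * h s) / 3"

definition Phi :: "real \<Rightarrow> real \<Rightarrow> (real \<Rightarrow> real) \<Rightarrow> real \<Rightarrow> real" where
  "Phi m n x t = m + n*(1 - exp(-3*t))/3 + Kop (\<lambda>s. R (x s)) t"

definition Gd :: "real \<Rightarrow> real \<Rightarrow> (real \<Rightarrow> real) \<Rightarrow> real \<Rightarrow> real" where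
  "Gd m n x t = n*exp(-3*t) + exp(-3*t) * integral {0..t} (\<lambda>s. exp(3* s) * R (x s))"

lemma int_deriv:
  fixes g :: "real \<Rightarrow> real"
  assumes "continuous_on {0..} g" "t \<ge> 0"
  shows "((\<lambda>u. integral {0..u} g) has_real_derivative g t) (at t within {0..})"
proof -
  have c: "continuous_on {0..t+1} g" using assms(1) by (rule continuous_on_subset) auto
  have "at t within {0..t+1} = at t within {0..}"
    by (rule at_within_nhd[of _ "{..<t+1}"]) (use assms(2) in auto)
  then show ?thesis using integral_has_real_derivative[OF c, of t] assms(2) by simp
qed

lemma int_bound:
  fixes h :: "real \<Rightarrow> real"
  assumes h: "continuous_on {0..t} h" and t: "t \<ge> 0" and lam: "lam > 0" and b: "b \<ge> 0"
    and hb: "\<And>s. s \<in> {0..t} \<Longrightarrow> \<bar>h s\<bar> \<le> a + b * exp(lam* s)"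
  shows "\<bar>integral {0..t} h\<bar> \<le> a*t + b*exp(lam*t)/lam"
proof -
  define G where "G s = a* s + b*exp(lam* s)/lam" for s
  have "((\<lambda>s. a + b*exp(lam* s)) has_integral (G t - G 0)) {0..t}"
  proof (rule fundamental_theorem_of_calculus[OF t])
    fix x assume "x \<in> {0..t}"
    show "(G has_vector_derivative a + b*exp(lam*x)) (at x within {0..t})"
      unfolding G_def has_real_derivative_iff_has_vector_derivative[symmetric]
      using lam by (auto intro!: derivative_eq_intros)
  qed
  then have ig: "integral {0..t} (\<lambda>s. a + b*exp(lam* s)) = G t - G 0"
    and ii: "(\<lambda>s. a + b*exp(lam* s)) integrable_on {0..t}"
    by (auto simp: integral_unique has_integral_integrable)
  have "norm (integral {0..t} h) \<le> integral {0..t} (\<lambda>s. a + b*exp(lam* s))"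
    by (rule integral_norm_bound_integral) (use h hb ii in \<open>auto intro!: integrable_continuous_interval\<close>)
  also have "\<dots> = G t - G 0" by (rule ig)
  also have "\<dots> \<le> a*t + b*exp(lam*t)/lam" unfolding G_def using lam b by simp
  finally show ?thesis by simp
qed

lemma Kop_bound:
  fixes h :: "real \<Rightarrow> real"
  assumes h: "continuous_on {0..t} h" and t: "t \<ge> 0" and lam: "lam > 0" and a: "a \<ge> 0" and b: "b \<ge> 0"
    and hb: "\<And>s. s \<in> {0..t} \<Longrightarrow> \<bar>h s\<bar> \<le> a + b * exp(lam* s)"
  shows "\<bar>Kop h t\<bar> \<le> 2/3 * (a*t + b*exp(lam*t)/lam)"
proof -
  define X where "X = a*t + b*exp(lam*t)/lam"
  have 1: "\<bar>integral {0..t} h\<bar> \<le> X" unfolding X_def by (rule int_bound[OF h t lam b hb])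
  have "\<bar>integral {0..t} (\<lambda>s. exp(3* s) * h s)\<bar> \<le> (exp(3*t)*a)*t + (exp(3*t)*b)*exp(lam*t)/lam"
  proof (rule int_bound[OF _ t lam])
    show "continuous_on {0..t} (\<lambda>s. exp(3* s) * h s)" using h by (intro continuous_intros)
    show "0 \<le> exp(3*t)*b" using b by simp
  next
    fix s assume s: "s \<in> {0..t}"
    have "\<bar>exp(3* s) * h s\<bar> = exp(3* s) * \<bar>h s\<bar>" by (simp add: abs_mult)
    also have "\<dots> \<le> exp(3*t) * (a + b * exp(lam* s))"
      using s hb[OF s] by (intro mult_mono) auto
    finally show "\<bar>exp(3* s) * h s\<bar> \<le> exp(3*t)*a + exp(3*t)*b * exp(lam* s)"
      by (simp add: algebra_simps)
  qed
  also have "\<dots> = exp(3*t) * X" unfolding X_def by (simp add: algebra_simps)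
  finally have 2: "\<bar>integral {0..t} (\<lambda>s. exp(3* s) * h s)\<bar> \<le> exp(3*t) * X" .
  have "\<bar>exp(-3*t) * integral {0..t} (\<lambda>s. exp(3* s) * h s)\<bar> \<le> exp(-3*t) * (exp(3*t) * X)"
    using 2 by (simp add: abs_mult)
  also have "\<dots> = X" by (simp add: exp_minus field_simps)
  finally have 3: "\<bar>exp(-3*t) * integral {0..t} (\<lambda>s. exp(3* s) * h s)\<bar> \<le> X" .
  show ?thesis unfolding Kop_def X_def[symmetric] using 1 3 by linarith
qed

lemma Kop_diff:
  fixes h1 h2 :: "real \<Rightarrow> real"
  assumes "continuous_on {0..t} h1" "continuous_on {0..t} h2"
  shows "Kop h1 t - Kop h2 t = Kop (\<lambda>s. h1 s - h2 s) t"
proof -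
  have i: "h1 integrable_on {0..t}" "h2 integrable_on {0..t}"
    "(\<lambda>s. exp(3* s) * h1 s) integrable_on {0..t}" "(\<lambda>s. exp(3* s) * h2 s) integrable_on {0..t}"
    using assms by (auto intro!: integrable_continuous_interval continuous_intros)
  have e: "(\<lambda>s. exp(3* s) * (h1 s - h2 s)) = (\<lambda>s. exp(3* s) * h1 s - exp(3* s) * h2 s)"
    by (simp add: algebra_simps)
  show ?thesis unfolding Kop_def e integral_diff[OF i(1,2)] integral_diff[OF i(3,4)]
    by (simp add: algebra_simps diff_divide_distrib)
qed

lemma alg1:
  fixes E e n r i :: real
  assumes "E*e = 1"
  shows "n*e + ((1/3) * r - (1/3) * ((e * (-3)) * i + E * r * e)) = n*e + e*i"
    and "n*(e * (-3)) + ((e * (-3)) * i + E * r * e) = r - 3 * (n*e + e*i)"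
proof -
  have "E*r*e = r" using assms by (simp add: mult_ac)
  then show "n*e + ((1/3) * r - (1/3) * ((e * (-3)) * i + E * r * e)) = n*e + e*i"
    and "n*(e * (-3)) + ((e * (-3)) * i + E * r * e) = r - 3 * (n*e + e*i)"
    by (simp_all add: algebra_simps)
qed

lemma exp3: "exp(3 * t) * exp(-3*t) = (1::real)"
  by (simp add: exp_add[symmetric])

lemma Phi_deriv:
  assumes x: "continuous_on {0..} x" and t: "t \<ge> 0"
  shows "(Phi m n x has_real_derivative Gd m n x t) (at t within {0..})"
proof -
  have c1: "continuous_on {0..} (\<lambda>s. R (x s))" by (rule continuous_on_compose2[OF R_cont[of UNIV] x]) auto
  have c2: "continuous_on {0..} (\<lambda>s. exp(3 * s) * R (x s))" using c1 by (intro continuous_intros)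
  define I1 where "I1 u = integral {0..u} (\<lambda>s. R (x s))" for u
  define I2 where "I2 u = integral {0..u} (\<lambda>s. exp(3 * s) * R (x s))" for u
  have d1: "(I1 has_real_derivative R (x t)) (at t within {0..})"
    unfolding I1_def using int_deriv[OF c1 t] by simp
  have d2: "(I2 has_real_derivative exp(3 * t) * R (x t)) (at t within {0..})"
    unfolding I2_def using int_deriv[OF c2 t] by simp
  have de: "((\<lambda>t. exp(-3*t)) has_real_derivative exp(-3*t) * (-3)) (at t within {0..})"
    by (auto intro!: derivative_eq_intros)
  have dA: "((\<lambda>t. m + n*(1 - exp(-3*t))/3) has_real_derivative n*exp(-3*t)) (at t within {0..})"
    by (auto intro!: derivative_eq_intros)
  have e: "Phi m n x = (\<lambda>t. (m + n*(1 - exp(-3*t))/3) + ((1/3) * I1 t - (1/3) * (exp(-3*t) * I2 t)))"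
    unfolding Phi_def Kop_def I1_def I2_def by (auto simp: fun_eq_iff)
  have "((\<lambda>t. (m + n*(1 - exp(-3*t))/3) + ((1/3) * I1 t - (1/3) * (exp(-3*t) * I2 t))) has_real_derivative
     n*exp(-3*t) + ((1/3) * R (x t) - (1/3) * ((exp(-3*t) * (-3)) * I2 t + exp(3 * t) * R (x t) * exp(-3*t))))
     (at t within {0..})"
    by (rule DERIV_add[OF dA DERIV_diff[OF DERIV_cmult[OF d1] DERIV_cmult[OF DERIV_mult[OF de d2]]]])
  moreover have "n*exp(-3*t) + ((1/3) * R (x t) - (1/3) * ((exp(-3*t) * (-3)) * I2 t + exp(3 * t) * R (x t) * exp(-3*t)))
     = Gd m n x t"
    unfolding Gd_def I2_def by (rule alg1(1)[OF exp3])
  ultimately show ?thesis using e by simp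
qed

lemma Gd_deriv:
  assumes x: "continuous_on {0..} x" and t: "t > 0"
  shows "(Gd m n x has_real_derivative (R (x t) - 3 * Gd m n x t)) (at t)"
proof -
  have c1: "continuous_on {0..} (\<lambda>s. R (x s))" by (rule continuous_on_compose2[OF R_cont[of UNIV] x]) auto
  have c2: "continuous_on {0..} (\<lambda>s. exp(3 * s) * R (x s))" using c1 by (intro continuous_intros)
  define I2 where "I2 u = integral {0..u} (\<lambda>s. exp(3 * s) * R (x s))" for u
  have "t \<in> interior {0..}" using t by auto
  then have eq: "at t within {0..} = at t" by (rule at_within_interior)
  have d2': "((\<lambda>u. integral {0..u} (\<lambda>s. exp(3 * s) * R (x s))) has_real_derivative exp(3 * t) * R (x t)) (at t within {0..})"
    by (rule int_deriv[OF c2]) (use t in simp)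
  have I2e: "I2 = (\<lambda>u. integral {0..u} (\<lambda>s. exp(3 * s) * R (x s)))" by (simp add: I2_def fun_eq_iff)
  have d2: "(I2 has_real_derivative exp(3 * t) * R (x t)) (at t)"
    using d2' unfolding eq I2e .
  have de: "((\<lambda>t. exp(-3*t)) has_real_derivative exp(-3*t) * (-3)) (at t)"
    by (auto intro!: derivative_eq_intros)
  have e: "Gd m n x = (\<lambda>t. n*exp(-3*t) + exp(-3*t) * I2 t)"
    unfolding Gd_def I2_def by simp
  have D: "((\<lambda>t. n*exp(-3*t) + exp(-3*t) * I2 t) has_real_derivative
      n*(exp(-3*t) * (-3)) + ((exp(-3*t) * (-3)) * I2 t + exp(3 * t) * R (x t) * exp(-3*t))) (at t)"
    by (rule DERIV_add[OF DERIV_cmult[OF de] DERIV_mult[OF de d2]])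
  have eqD: "n*(exp(-3*t) * (-3)) + ((exp(-3*t) * (-3)) * I2 t + exp(3 * t) * R (x t) * exp(-3*t))
     = R (x t) - 3 * (n*exp(-3*t) + exp(-3*t) * I2 t)"
    by (rule alg1(2)[OF exp3])
  show ?thesis using D unfolding eqD e .
qed

lemma Gd_cont:
  assumes x: "continuous_on {0..} x"
  shows "continuous_on {0..} (Gd m n x)"
proof -
  have c1: "continuous_on {0..} (\<lambda>s. R (x s))" by (rule continuous_on_compose2[OF R_cont[of UNIV] x]) auto
  have c2: "continuous_on {0..} (\<lambda>s. exp(3* s) * R (x s))" using c1 by (intro continuous_intros)
  have "continuous_on {0..} (\<lambda>u. integral {0..u} (\<lambda>s. exp(3* s) * R (x s)))"
    by (rule DERIV_continuous_on) (rule int_deriv[OF c2], auto)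
  then show ?thesis unfolding Gd_def by (intro continuous_intros)
qed

lemma fixed_is_sol:
  assumes x: "continuous_on {0..} x" and fx: "\<And>t. t \<ge> 0 \<Longrightarrow> x t = Phi m n x t"
  shows "is_sol m n x (Gd m n x)"
  unfolding is_sol_def
proof (intro conjI allI impI)
  have "x 0 = Phi m n x 0" using fx[of 0] by simp
  also have "\<dots> = m" by (simp add: Phi_def Kop_def)
  finally show "x 0 = m" .
  show "Gd m n x 0 = n" by (simp add: Gd_def)
  show "continuous_on {0..} (Gd m n x)" by (rule Gd_cont[OF x])
next
  fix t :: real assume t: "t \<ge> 0"
  show "(x has_real_derivative Gd m n x t) (at t within {0..})"
  proof (rule has_field_derivative_transform_within[OF Phi_deriv[OF x t], of 1])
    fix y :: real assume "y \<in> {0..}"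
    then have "x y = Phi m n x y" using fx by simp
    then show "Phi m n x y = x y" by simp
  qed (use t in auto)
next
  fix t :: real assume t: "t > 0"
  show "(Gd m n x has_real_derivative R (x t) - 3 * Gd m n x t) (at t)" by (rule Gd_deriv[OF x t])
qed

lemma R_abs: "\<bar>R y\<bar> \<le> 4 + 4 * \<bar>y\<bar>"
proof -
  have "R (-1) = 0" by (simp add: R_def)
  then have "\<bar>R y\<bar> \<le> 4 * \<bar>y - (-1)\<bar>" using R_lip[of y "-1"] by simp
  also have "\<dots> \<le> 4 + 4 * \<bar>y\<bar>" using abs_triangle_ineq[of y 1] by simp
  finally show ?thesis .
qed

definition vz :: "(real \<Rightarrow>\<^sub>C real) \<Rightarrow> real \<Rightarrow> real" where
  "vz z s = exp(8 * s) * apply_bcontfun z s"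

definition PsiF :: "real \<Rightarrow> real \<Rightarrow> (real \<Rightarrow>\<^sub>C real) \<Rightarrow> real \<Rightarrow> real" where
  "PsiF m n z t = exp(-8 * max t 0) * Phi m n (vz z) (max t 0)"

lemma vz_cont: "continuous_on S (vz z)"
  unfolding vz_def by (intro continuous_intros) auto

lemma z_bound: fixes z :: "real \<Rightarrow>\<^sub>C real" shows "\<exists>B\<ge>0. \<forall>x. \<bar>apply_bcontfun z x\<bar> \<le> B"
proof -
  have "bounded (range (apply_bcontfun z))" by simp
  then obtain a where "\<forall>y\<in>range (apply_bcontfun z). norm (y::real) \<le> a" unfolding bounded_iff by blast
  then have "\<forall>x. \<bar>apply_bcontfun z x\<bar> \<le> a" by auto
  moreover have "a \<ge> 0" using \<open>\<forall>x. \<bar>apply_bcontfun z x\<bar> \<le> a\<close> by (meson abs_ge_zero order_trans)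
  ultimately show ?thesis by blast
qed

lemma Phi_cont: "continuous_on {0..} x \<Longrightarrow> continuous_on {0..} (Phi m n x)"
  by (rule DERIV_continuous_on[of _ _ "Gd m n x"]) (rule Phi_deriv, auto)

lemma exp_cancel: "exp(-8 * t) * exp(8 * t) = (1::real)"
  by (simp add: exp_add[symmetric])

lemma PsiF_in: "PsiF m n z \<in> bcontfun"
proof -
  obtain B where B: "B \<ge> 0" "\<And>x. \<bar>apply_bcontfun z x\<bar> \<le> B" using z_bound by blast
  show ?thesis
proof (rule bcontfun_normI)
  have c: "continuous_on {0..} (Phi m n (vz z))" by (rule Phi_cont[OF vz_cont])
  have "continuous_on UNIV (\<lambda>t. Phi m n (vz z) (max t 0))"
    by (rule continuous_on_compose2[OF c]) (auto intro!: continuous_intros)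
  then show "continuous_on UNIV (PsiF m n z)" unfolding PsiF_def by (intro continuous_intros)
next
  fix t :: real
  define tt where "tt = max t 0"
  have tt: "tt \<ge> 0" by (simp add: tt_def)
  define E where "E = exp(8 * tt)"
  have E1: "1 \<le> E" using tt by (simp add: E_def)
  have ttE: "tt \<le> E" unfolding E_def using exp_ge_add_one_self[of "8*tt"] tt by linarith
  have hb: "\<bar>R (vz z s)\<bar> \<le> 4 + 4*B * exp(8 * s)" for s
  proof -
    have "\<bar>R (vz z s)\<bar> \<le> 4 + 4 * \<bar>vz z s\<bar>" by (rule R_abs)
    also have "\<bar>vz z s\<bar> = exp(8 * s) * \<bar>apply_bcontfun z s\<bar>" by (simp add: vz_def abs_mult)
    also have "\<dots> \<le> exp(8 * s) * B" using B(2)[of s] by (intro mult_left_mono) auto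
    finally show ?thesis by (simp add: algebra_simps)
  qed
  have cR: "continuous_on {0..tt} (\<lambda>s. R (vz z s))"
    by (rule continuous_on_compose2[OF R_cont[of UNIV] vz_cont]) auto
  have K: "\<bar>Kop (\<lambda>s. R (vz z s)) tt\<bar> \<le> 2/3 * (4*tt + (4*B)*exp(8*tt)/8)"
    by (rule Kop_bound[OF cR tt]) (use B hb in auto)
  have n1: "\<bar>n*(1 - exp(-3*tt))/3\<bar> \<le> \<bar>n\<bar>"
  proof -
    have "0 \<le> 1 - exp(-3*tt)" "1 - exp(-3*tt) \<le> 1" using tt by auto
    then have "\<bar>1 - exp(-3*tt)\<bar> \<le> 1" by auto
    then have "\<bar>n\<bar> * \<bar>1 - exp(-3*tt)\<bar> \<le> \<bar>n\<bar>" by (simp add: mult_left_le)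
    then show ?thesis by (simp add: abs_mult)
  qed
  have "\<bar>Phi m n (vz z) tt\<bar> \<le> \<bar>m\<bar> + \<bar>n\<bar> + 2/3 * (4*tt + (4*B)*exp(8*tt)/8)"
    unfolding Phi_def using K n1 by linarith
  also have "\<dots> \<le> E * (\<bar>m\<bar> + \<bar>n\<bar> + 3 + B)"
  proof -
    have "\<bar>m\<bar> + \<bar>n\<bar> \<le> E * (\<bar>m\<bar> + \<bar>n\<bar>)" using E1 by (simp add: mult_le_cancel_right1)
    moreover have "2/3 * (4*tt) \<le> 3 * E" using ttE tt by linarith
    moreover have "2/3 * ((4*B)*exp(8*tt)/8) \<le> B * E" using B(1) E1 unfolding E_def by simp
    ultimately show ?thesis by (simp add: algebra_simps)
  qed
  finally have P: "\<bar>Phi m n (vz z) tt\<bar> \<le> E * (\<bar>m\<bar> + \<bar>n\<bar> + 3 + B)" .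
  have "norm (PsiF m n z t) = exp(-8*tt) * \<bar>Phi m n (vz z) tt\<bar>"
    unfolding PsiF_def tt_def by (simp add: abs_mult)
  also have "\<dots> \<le> exp(-8*tt) * (E * (\<bar>m\<bar> + \<bar>n\<bar> + 3 + B))" using P by (intro mult_left_mono) auto
  also have "\<dots> = \<bar>m\<bar> + \<bar>n\<bar> + 3 + B" unfolding E_def using exp_cancel[of tt] by (simp add: mult.assoc[symmetric])
  finally show "norm (PsiF m n z t) \<le> \<bar>m\<bar> + \<bar>n\<bar> + 3 + B" .
qed
qed




definition Psi :: "real \<Rightarrow> real \<Rightarrow> (real \<Rightarrow>\<^sub>C real) \<Rightarrow> (real \<Rightarrow>\<^sub>C real)" where
  "Psi m n z = Bcontfun (PsiF m n z)"

lemma Psi_apply: "apply_bcontfun (Psi m n z) t = PsiF m n z t"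
  unfolding Psi_def using Bcontfun_inverse[OF PsiF_in] by simp

lemma Psi_contr: "dist (Psi m n z1) (Psi m n z2) \<le> 1/3 * dist z1 z2"
proof (rule dist_bound)
  fix t :: real
  define d where "d = dist z1 z2"
  have d0: "d \<ge> 0" by (simp add: d_def)
  define tt where "tt = max t 0"
  have tt: "tt \<ge> 0" by (simp add: tt_def)
  have c1: "continuous_on {0..tt} (\<lambda>s. R (vz z1 s))"
    by (rule continuous_on_compose2[OF R_cont[of UNIV] vz_cont]) auto
  have c2: "continuous_on {0..tt} (\<lambda>s. R (vz z2 s))"
    by (rule continuous_on_compose2[OF R_cont[of UNIV] vz_cont]) auto
  have hb: "\<bar>R (vz z1 s) - R (vz z2 s)\<bar> \<le> 0 + (4*d) * exp(8 * s)" for s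
  proof -
    have "\<bar>R (vz z1 s) - R (vz z2 s)\<bar> \<le> 4 * \<bar>vz z1 s - vz z2 s\<bar>" by (rule R_lip)
    also have "\<bar>vz z1 s - vz z2 s\<bar> = exp(8 * s) * \<bar>apply_bcontfun z1 s - apply_bcontfun z2 s\<bar>"
      by (simp add: vz_def abs_mult right_diff_distrib[symmetric])
    also have "\<dots> \<le> exp(8 * s) * d"
      using dist_bounded[of z1 s z2] unfolding d_def dist_real_def by (intro mult_left_mono) auto
    finally show ?thesis by (simp add: algebra_simps)
  qed
  have K: "\<bar>Kop (\<lambda>s. R (vz z1 s) - R (vz z2 s)) tt\<bar> \<le> 2/3 * (0*tt + (4*d)*exp(8*tt)/8)"
    by (rule Kop_bound) (use c1 c2 tt d0 hb in \<open>auto intro!: continuous_intros\<close>)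
  have "PsiF m n z1 t - PsiF m n z2 t = exp(-8*tt) * (Kop (\<lambda>s. R (vz z1 s)) tt - Kop (\<lambda>s. R (vz z2 s)) tt)"
    unfolding PsiF_def Phi_def tt_def[symmetric] by (simp add: algebra_simps)
  also have "\<dots> = exp(-8*tt) * Kop (\<lambda>s. R (vz z1 s) - R (vz z2 s)) tt"
    using Kop_diff[OF c1 c2] by simp
  finally have eq: "PsiF m n z1 t - PsiF m n z2 t = exp(-8*tt) * Kop (\<lambda>s. R (vz z1 s) - R (vz z2 s)) tt" .
  have "\<bar>exp(-8*tt) * Kop (\<lambda>s. R (vz z1 s) - R (vz z2 s)) tt\<bar> \<le> exp(-8*tt) * (2/3 * (0*tt + (4*d)*exp(8*tt)/8))"
    using K by (simp add: abs_mult)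
  also have "\<dots> = 1/3 * d * (exp(-8*tt) * exp(8*tt))" by (simp add: algebra_simps)
  also have "\<dots> = 1/3 * d" using exp_cancel[of tt] by simp
  finally show "dist (apply_bcontfun (Psi m n z1) t) (apply_bcontfun (Psi m n z2) t) \<le> 1/3 * dist z1 z2"
    unfolding Psi_apply dist_real_def eq d_def .
qed

lemma existence: "\<exists>f g. is_sol m n f g"
proof -
  have "\<exists>!z. Psi m n z = z" by (rule banach_fix_type[of "1/3"]) (use Psi_contr in auto)
  then obtain z where z: "Psi m n z = z" by blast
  have fx: "vz z t = Phi m n (vz z) t" if t: "t \<ge> 0" for t
  proof -
    have a: "apply_bcontfun z t = PsiF m n z t" by (metis Psi_apply z)
    have b: "PsiF m n z t = exp(-8*t) * Phi m n (vz z) t" using t by (simp add: PsiF_def)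
    have c: "exp(8*t) * exp(-8*t) = (1::real)" by (simp add: exp_add[symmetric])
    have "vz z t = exp(8*t) * apply_bcontfun z t" by (simp add: vz_def)
    also have "\<dots> = (exp(8*t) * exp(-8*t)) * Phi m n (vz z) t" unfolding a b by (simp only: mult.assoc)
    also have "\<dots> = Phi m n (vz z) t" unfolding c by simp
    finally show ?thesis .
  qed
  have "is_sol m n (vz z) (Gd m n (vz z))" by (rule fixed_is_sol[OF vz_cont fx])
  then show ?thesis by blast
qed

lemma sol: "is_sol m n (Vsol m n) (Vt m n)"
proof -
  obtain f g where "is_sol m n f g" using existence by blast
  then have "\<exists>p. is_sol m n (fst p) (snd p)" by (intro exI[of _ "(f,g)"]) simp
  then have "is_sol m n (fst (solpair m n)) (snd (solpair m n))"
    unfolding solpair_def by (rule someI_ex)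
  then show ?thesis unfolding Vsol_def[abs_def] Vt_def[abs_def] by simp
qed




lemma fwd_pos:
  assumes s: "is_sol m n f g" and t0: "t0 \<ge> 0" and f0: "f t0 \<ge> -1" and g0: "g t0 > 0"
    and t: "t \<ge> t0"
  shows "g t > 0"
proof (rule ccontr)
  assume "\<not> g t > 0"
  then have gt: "g t \<le> 0" by simp
  have gc: "continuous_on {t0..t} g" using sol_gcont[OF s] by (rule continuous_on_subset) (use t0 in auto)
  have fc: "continuous_on {t0..t} f" using sol_cont[OF s] by (rule continuous_on_subset) (use t0 in auto)
  define S where "S = {x \<in> {t0..t}. g x \<le> 0}"
  have Sne: "S \<noteq> {}" using gt t unfolding S_def by auto
  have Sb: "bdd_below S" unfolding S_def by (rule bdd_belowI[of _ t0]) auto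
  have Sc: "closed S" unfolding S_def
    by (rule continuous_on_closed_Collect_le[OF gc]) (auto intro: continuous_intros)
  define t1 where "t1 = Inf S"
  have t1S: "t1 \<in> S" unfolding t1_def by (rule closed_contains_Inf[OF Sne Sb Sc])
  then have t1: "t0 \<le> t1" "t1 \<le> t" "g t1 \<le> 0" unfolding S_def by auto
  have t01: "t0 < t1" using t1 g0 by (cases "t0 = t1") auto
  have pos: "g x > 0" if "t0 \<le> x" "x < t1" for x
  proof (rule ccontr)
    assume "\<not> g x > 0"
    then have "x \<in> S" unfolding S_def using that t1 by auto
    then have "t1 \<le> x" unfolding t1_def by (rule cInf_lower[OF _ Sb])
    then show False using that by simp
  qed
  have "f t0 < f t1"
  proof (rule DERIV_pos_imp_increasing_open[OF t01])
    fix x assume "t0 < x" "x < t1"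
    then show "\<exists>y. (f has_real_derivative y) (at x) \<and> y > 0"
      using sol_at[OF s, of x] pos[of x] t0 by (intro exI[of _ "g x"]) auto
  next
    show "continuous_on {t0..t1} f" using fc by (rule continuous_on_subset) (use t1 in auto)
  qed
  then have ft1: "f t1 > -1" using f0 by simp
  have "R (f t1) - 3 * g t1 > 0" using R_pos[OF ft1] ft1 t1 by simp
  then obtain d where d: "d > 0" "\<And>h. h > 0 \<Longrightarrow> h < d \<Longrightarrow> g (t1 - h) < g t1"
    using DERIV_pos_inc_left[OF sol_gat[OF s], of t1] t01 t0 by auto
  define h where "h = min (d/2) ((t1 - t0)/2)"
  have hh: "h \<le> (t1 - t0)/2" "h \<le> d/2" "h > 0" unfolding h_def
    by (rule min.cobounded2, rule min.cobounded1, use d t01 in simp)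
  have h: "h > 0" "h < d" "t0 \<le> t1 - h" "t1 - h < t1" using hh d t01 by auto
  have "g (t1 - h) < g t1" using d(2)[OF h(1,2)] .
  moreover have "g (t1 - h) > 0" using pos[OF h(3,4)] .
  ultimately show False using t1 by simp
qed

lemma lower_g:
  assumes s: "is_sol m n f g" and t: "t \<ge> 0"
  shows "g t \<ge> (n + 2/3) * exp(-3*t) - 2/3"
proof -
  define k where "k x = exp(3*x) * g x + 2/3 * exp(3*x)" for x
  have "k 0 \<le> k t"
  proof (rule DERIV_nonneg_imp_increasing_open[OF t])
    fix x :: real assume x: "0 < x" "x < t"
    have "(k has_real_derivative (exp(3*x) * 3 * g x + exp(3*x) * (R (f x) - 3 * g x) + 2/3 * (exp(3*x) * 3))) (at x)"
      unfolding k_def by (auto intro!: derivative_eq_intros sol_gat[OF s] x simp: algebra_simps)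
    moreover have "exp(3*x) * 3 * g x + exp(3*x) * (R (f x) - 3 * g x) + 2/3 * (exp(3*x) * 3) = exp(3*x) * (R (f x) + 2)"
      by (simp add: algebra_simps)
    moreover have "exp(3*x) * (R (f x) + 2) \<ge> 0" using R_ge[of "f x"] by simp
    ultimately show "\<exists>y. (k has_real_derivative y) (at x) \<and> y \<ge> 0" by metis
  next
    have "continuous_on {0..t} g" using sol_gcont[OF s] by (rule continuous_on_subset) auto
    then show "continuous_on {0..t} k" unfolding k_def by (intro continuous_intros)
  qed
  moreover have "k 0 = n + 2/3" using s unfolding k_def is_sol_def by simp
  ultimately have "n + 2/3 \<le> exp(3*t) * (g t + 2/3)" unfolding k_def by (simp add: algebra_simps)
  then have "exp(-3*t) * (n + 2/3) \<le> exp(-3*t) * (exp(3*t) * (g t + 2/3))" by (simp add: mult_left_mono)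
  also have "\<dots> = g t + 2/3" by (simp add: mult.assoc[symmetric] exp_add[symmetric])
  finally show ?thesis by (simp add: algebra_simps)
qed

lemma lower_f:
  assumes s: "is_sol m n f g" and t: "t \<ge> 0"
  shows "f t \<ge> m + (n + 2/3) * (1 - exp(-3*t)) / 3 - 2/3 * t"
proof -
  define q where "q x = f x - (n + 2/3) * (1 - exp(-3*x)) / 3 + 2/3 * x" for x
  have "q 0 \<le> q t"
  proof (rule DERIV_nonneg_imp_increasing_open[OF t])
    fix x :: real assume x: "0 < x" "x < t"
    have "(q has_real_derivative (g x - (n + 2/3) * (exp(-3*x) * 3) / 3 + 2/3)) (at x)"
      unfolding q_def by (auto intro!: derivative_eq_intros sol_at[OF s] x simp: algebra_simps)
    moreover have "g x - (n + 2/3) * (exp(-3*x) * 3) / 3 + 2/3 \<ge> 0" using lower_g[OF s, of x] x by simp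
    ultimately show "\<exists>y. (q has_real_derivative y) (at x) \<and> y \<ge> 0" by metis
  next
    have "continuous_on {0..t} f" using sol_cont[OF s] by (rule continuous_on_subset) auto
    then show "continuous_on {0..t} q" unfolding q_def by (intro continuous_intros) auto
  qed
  moreover have "q 0 = m" using s unfolding q_def is_sol_def by simp
  ultimately show ?thesis unfolding q_def by simp
qed


lemma sq_small:
  fixes c e d x :: real
  assumes c: "c \<ge> 1" and e: "e > 0" and d: "\<bar>d\<bar> < e / c" and x: "x^2 \<le> c * d^2"
  shows "\<bar>x\<bar> < e"
proof -
  have c0: "c > 0" using c by simp
  have cd: "\<bar>d\<bar> * c < e" using d c0 by (simp add: pos_less_divide_eq)
  have a: "0 \<le> c * d^2" using c0 by simp
  have "c * d^2 \<le> c * (c * d^2)" using mult_right_mono[OF c a] by simp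
  also have "\<dots> = (\<bar>d\<bar> * c)^2" by (simp add: power2_eq_square)
  also have "\<dots> < e^2" by (rule power_strict_mono[OF cd]) (use c0 in auto)
  finally have "\<bar>x\<bar>^2 < e^2" using x by simp
  then show ?thesis by (rule power2_less_imp_less) (use e in auto)
qed

lemma stab_close:
  assumes s1: "is_sol m n1 f1 g1" and s2: "is_sol m n2 f2 g2" and t: "0 \<le> t" "t \<le> T"
    and e: "e > 0" and d: "\<bar>n1 - n2\<bar> < e / exp(5*T)"
  shows "\<bar>f1 t - f2 t\<bar> < e \<and> \<bar>g1 t - g2 t\<bar> < e"
proof -
  have st: "(f1 t - f2 t)^2 + (g1 t - g2 t)^2 \<le> exp (5*t) * ((m-m)^2 + (n1-n2)^2)"
    by (rule stability[OF s1 s2 t(1)])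
  have "exp (5*t) * (n1-n2)^2 \<le> exp (5*T) * (n1-n2)^2" using t by (intro mult_right_mono) auto
  then have st2: "(f1 t - f2 t)^2 + (g1 t - g2 t)^2 \<le> exp (5*T) * (n1-n2)^2" using st by simp
  have c: "exp (5*T) \<ge> 1" using t by simp
  have z1: "0 \<le> (f1 t - f2 t)^2" "0 \<le> (g1 t - g2 t)^2" by simp_all
  have "(f1 t - f2 t)^2 \<le> exp (5*T) * (n1-n2)^2" using st2 z1 by linarith
  moreover have "(g1 t - g2 t)^2 \<le> exp (5*T) * (n1-n2)^2" using st2 z1 by linarith
  ultimately show ?thesis using sq_small[OF c e d] by blast
qed

lemma bm_nonempty: "(-1::real) \<in> beta_minus m"
proof -
  have s: "is_sol m (-1) (Vsol m (-1)) (Vt m (-1))" by (rule sol)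
  have c: "continuous_on {0..} (Vt m (-1))" using s by (rule sol_gcont)
  have g0: "Vt m (-1) 0 = -1" using s unfolding is_sol_def by simp
  obtain d where d: "d > 0" "\<And>x'. x' \<in> {0..} \<Longrightarrow> dist x' 0 < d \<Longrightarrow> dist (Vt m (-1) x') (Vt m (-1) 0) < 1"
    using c unfolding continuous_on_iff by (metis atLeast_iff order_refl zero_less_one)
  have "dist (Vt m (-1) (d/2)) (Vt m (-1) 0) < 1" using d by (intro d(2)) (auto simp: dist_real_def)
  then have "Vt m (-1) (d/2) < 0" using g0 by (simp add: dist_real_def)
  then show ?thesis unfolding beta_minus_def using d(1) by (intro CollectI exI[of _ "d/2"]) auto
qed

lemma bm_open: "open (beta_minus m)"
  unfolding open_dist
proof
  fix n0 assume "n0 \<in> beta_minus m"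
  then obtain t where t: "t > 0" "Vt m n0 t < 0" unfolding beta_minus_def by auto
  define e where "e = - Vt m n0 t"
  have e: "e > 0" using t unfolding e_def by simp
  show "\<exists>r>0. \<forall>y. dist y n0 < r \<longrightarrow> y \<in> beta_minus m"
  proof (intro exI[of _ "e / exp(5*t)"] conjI allI impI)
    show "e / exp(5*t) > 0" using e by simp
  next
    fix y assume "dist y n0 < e / exp(5*t)"
    then have "\<bar>y - n0\<bar> < e / exp(5*t)" by (simp add: dist_real_def)
    then have "\<bar>Vt m y t - Vt m n0 t\<bar> < e"
      using stab_close[OF sol sol, of t t e] t e by auto
    then have "Vt m y t < 0" unfolding e_def by simp
    then show "y \<in> beta_minus m" unfolding beta_minus_def using t by auto
  qed
qed

lemma bp_nonempty:
  assumes m: "m < -1"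
  shows "exp 3 + 2*(-1-3*m) \<in> beta_plus m"
proof -
  define N where "N = exp 3 + 2*(-1-3*m)"
  define f where "f = Vsol m N"
  define g where "g = Vt m N"
  have s: "is_sol m N f g" unfolding f_def g_def by (rule sol)
  have e3: "exp (3::real) \<ge> 4" using exp_ge_add_one_self[of 3] by simp
  have em3: "exp (-3::real) * exp 3 = 1" by (simp add: exp_add[symmetric])
  have Nb: "N + 2/3 > exp 3" "N + 2/3 > 2*(-1-3*m)" unfolding N_def using m e3 by auto
  have gpos: "g t > 0" if t: "0 \<le> t" "t \<le> 1" for t
  proof -
    have "exp(-3) \<le> exp(-3*t)" using t by simp
    then have "(N + 2/3) * exp(-3) \<le> (N + 2/3) * exp(-3*t)" using Nb e3 by (intro mult_left_mono) auto
    moreover have "exp 3 * exp(-3) < (N + 2/3) * exp(-3)" using Nb by (intro mult_strict_right_mono) auto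
    moreover have "exp 3 * exp(-3) = (1::real)" using em3 by (simp add: mult.commute)
    ultimately have "(N + 2/3) * exp(-3*t) > 1" by linarith
    then show ?thesis using lower_g[OF s t(1)] by linarith
  qed
  have f1: "f 1 > -1"
  proof -
    have "exp(-3::real) \<le> 1/2"
    proof -
      have "exp(-3::real) = 1 / exp 3" by (simp add: exp_minus field_simps)
      also have "\<dots> \<le> 1/4" using e3 by (simp add: divide_simps)
      finally show ?thesis by simp
    qed
    then have "(N + 2/3) * (1/2) \<le> (N + 2/3) * (1 - exp(-3))" using Nb e3 by (intro mult_left_mono) auto
    moreover have "(N + 2/3) * (1/2) = N/2 + 1/3" by simp
    ultimately have h1: "N/2 + 1/3 \<le> (N + 2/3) * (1 - exp(-3))" by simp
    define P where "P = (N + 2/3) * (1 - exp(-3))"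
    have "P > -1 - 3*m" using h1 Nb(2) unfolding P_def[symmetric] by (simp add: field_simps)
    then have "(N + 2/3) * (1 - exp(-3)) > -1 - 3*m" unfolding P_def .
    then show ?thesis using lower_f[OF s, of 1] by simp
  qed
  have "\<forall>t\<ge>0. g t > 0"
  proof (intro allI impI)
    fix t :: real assume t: "t \<ge> 0"
    show "g t > 0"
    proof (cases "t \<le> 1")
      case True then show ?thesis using gpos t by auto
    next
      case False
      show ?thesis by (rule fwd_pos[OF s, of 1]) (use f1 gpos[of 1] False in auto)
    qed
  qed
  then show ?thesis unfolding beta_plus_def N_def[symmetric] using f1 unfolding f_def g_def
    by (auto intro!: exI[of _ 1])
qed

lemma bp_open: "open (beta_plus m)"
  unfolding open_dist
proof
  fix n0 assume "n0 \<in> beta_plus m"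
  then obtain t1 where g0: "\<forall>t\<ge>0. Vt m n0 t > 0" and t1: "t1 > 0" "Vsol m n0 t1 > -1"
    unfolding beta_plus_def by auto
  have c: "continuous_on {0..t1} (Vt m n0)" using sol_gcont[OF sol] by (rule continuous_on_subset) auto
  obtain x0 where x0: "x0 \<in> {0..t1}" "\<And>y. y \<in> {0..t1} \<Longrightarrow> Vt m n0 x0 \<le> Vt m n0 y"
    using continuous_attains_inf[OF compact_Icc _ c] t1 by auto
  define e where "e = min (Vt m n0 x0) (Vsol m n0 t1 + 1)"
  have e: "e > 0" using g0 x0 t1 unfolding e_def by auto
  show "\<exists>r>0. \<forall>y. dist y n0 < r \<longrightarrow> y \<in> beta_plus m"
  proof (intro exI[of _ "e / exp(5*t1)"] conjI allI impI)
    show "e / exp(5*t1) > 0" using e by simp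
  next
    fix y assume "dist y n0 < e / exp(5*t1)"
    then have d: "\<bar>y - n0\<bar> < e / exp(5*t1)" by (simp add: dist_real_def)
    have cl: "\<bar>Vsol m y t - Vsol m n0 t\<bar> < e \<and> \<bar>Vt m y t - Vt m n0 t\<bar> < e" if "0 \<le> t" "t \<le> t1" for t
      by (rule stab_close[OF sol sol that e d])
    have gp: "Vt m y t > 0" if "0 \<le> t" "t \<le> t1" for t
    proof -
      have "e \<le> Vt m n0 t" using x0(2)[of t] that unfolding e_def by auto
      then show ?thesis using cl[OF that] by linarith
    qed
    have fp: "Vsol m y t1 > -1"
    proof -
      have "e \<le> Vsol m n0 t1 + 1" unfolding e_def by auto
      then show ?thesis using cl[of t1] t1 by linarith
    qed
    have "\<forall>t\<ge>0. Vt m y t > 0"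
    proof (intro allI impI)
      fix t :: real assume t: "t \<ge> 0"
      show "Vt m y t > 0"
      proof (cases "t \<le> t1")
        case True then show ?thesis using gp t by auto
      next
        case False
        show ?thesis by (rule fwd_pos[OF sol, of t1]) (use fp gp[of t1] t1 False in auto)
      qed
    qed
    then show "y \<in> beta_plus m" unfolding beta_plus_def using fp t1 by auto
  qed
qed

theorem lemma4p2:
  fixes m :: real
  assumes "m < -1"
  shows "open (beta_plus m) \<and> beta_plus m \<noteq> {} \<and> open (beta_minus m) \<and> beta_minus m \<noteq> {}"
  using bp_open bp_nonempty[OF assms] bm_open bm_nonempty by blast


end
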